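(* Let $G=(V,E)$ be a finite, undirected, connected graph with unit edge weights and vertex set $V=\{v_1,\dots,v_N\}$, and let $L=D-A$ be its graph Laplacian. Let $\phi_{\lambda_1},\dots,\phi_{\lambda_N}$ be an orthonormal basis of $\mathbb{C}^N$ consisting of eigenvectors of $L$. For $t\ge 0$ let $H_t=e^{-tL}$, let $D_i(t)=\operatorname{diag}(H_t(\cdot,v_i))$, and let $\psi_{ij}(t)=D_i(t)\phi_{\lambda_j}$ for $i,j\in\{1,\dots,N\}$. Then for every $t\ge 0$ the family $\{\psi_{ij}(t)\}_{i,j=1}^N$ is a frame for $\mathbb{C}^N$, and its frame operator $S(t)=\sum_{i,j=1}^N \psi_{ij}(t)\psi_{ij}(t)^*$ is the diagonal matrix $$S(t)=\sum_{i=1}^N D_i(t)^2.$$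
   Context: The graph Laplacian acts by $Lf(v)=\sum_{u\sim v}(f(v)-f(u))$; in matrix form $L=D-A$ with $A$ the adjacency matrix and $D$ the diagonal degree matrix. $\mathbb{C}^N$ is identified with functions on $V$ with the inner product $\langle f,g\rangle=\sum_{v\in V}f(v)\overline{g(v)}$. $H_t(\cdot,v_i)$ denotes the $i$-th column of $H_t$, and $\operatorname{diag}(x)$ is the diagonal matrix with diagonal entries $x$. A family $\{\psi_k\}$ is a frame for $\mathbb{C}^N$ if there exist $0<A\le B$ with $A\|f\|^2\le\sum_k|\langle f,\psi_k\rangle|^2\le B\|f\|^2$ for all $f\in\mathbb{C}^N$. *)

theory Defs
  imports "HOL-Analysis.Analysis"
begin

text \<open>Vertices are the elements of a finite type 'n (so N = CARD('n)); functions
  on V are vectors complex^'n and N x N matrices are complex^'n^'n.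
  A simple undirected graph is given by a symmetric irreflexive edge relation E.\<close>

definition adjacency_matrix :: "('n::finite \<Rightarrow> 'n \<Rightarrow> bool) \<Rightarrow> complex^'n^'n" where
  "adjacency_matrix E = (\<chi> a b. if E a b then 1 else 0)"

definition degree_matrix :: "('n::finite \<Rightarrow> 'n \<Rightarrow> bool) \<Rightarrow> complex^'n^'n" where
  "degree_matrix E = (\<chi> a b. if a = b then of_nat (card {u. E a u}) else 0)"

definition graph_laplacian :: "('n::finite \<Rightarrow> 'n \<Rightarrow> bool) \<Rightarrow> complex^'n^'n" where
  "graph_laplacian E = degree_matrix E - adjacency_matrix E"

definition mat_pow :: "complex^'n::finite^'n \<Rightarrow> nat \<Rightarrow> complex^'n^'n" where
  "mat_pow M k = (((**) M) ^^ k) (mat 1)"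

definition mat_exp :: "complex^'n::finite^'n \<Rightarrow> complex^'n^'n" where
  "mat_exp M = (\<Sum>k. (1 / fact k) *\<^sub>R mat_pow M k)"

definition heat_kernel :: "('n::finite \<Rightarrow> 'n \<Rightarrow> bool) \<Rightarrow> real \<Rightarrow> complex^'n^'n" where
  "heat_kernel E t = mat_exp ((- t) *\<^sub>R graph_laplacian E)"

definition cinner :: "complex^'n::finite \<Rightarrow> complex^'n \<Rightarrow> complex" where
  "cinner f g = (\<Sum>v\<in>UNIV. f $ v * cnj (g $ v))"

definition diag_mat :: "complex^'n::finite \<Rightarrow> complex^'n^'n" where
  "diag_mat x = (\<chi> a b. if a = b then x $ a else 0)"

definition column :: "complex^'n::finite^'n \<Rightarrow> 'n \<Rightarrow> complex^'n" where
  "column M i = (\<chi> v. M $ v $ i)"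

definition outer :: "complex^'n::finite \<Rightarrow> complex^'n^'n" where
  "outer f = (\<chi> a b. f $ a * cnj (f $ b))"

definition is_frame :: "('k \<Rightarrow> complex^'n::finite) \<Rightarrow> 'k set \<Rightarrow> bool" where
  "is_frame \<psi> K \<longleftrightarrow> (\<exists>A B. 0 < A \<and> A \<le> B \<and>
     (\<forall>f. A * (norm f)\<^sup>2 \<le> (\<Sum>k\<in>K. (cmod (cinner f (\<psi> k)))\<^sup>2) \<and>
          (\<Sum>k\<in>K. (cmod (cinner f (\<psi> k)))\<^sup>2) \<le> B * (norm f)\<^sup>2))"

definition frame_operator :: "('k \<Rightarrow> complex^'n::finite) \<Rightarrow> 'k set \<Rightarrow> complex^'n^'n" where
  "frame_operator \<psi> K = (\<Sum>k\<in>K. outer (\<psi> k))"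

end

theory Submission imports Defs begin

lemma complete_basis:
  fixes \<phi> :: "'n::finite \<Rightarrow> complex^'n"
  assumes orth: "\<And>j k. cinner (\<phi> j) (\<phi> k) = (if j = k then 1 else 0)"
  shows "(\<Sum>j\<in>UNIV. \<phi> j $ a * cnj (\<phi> j $ b)) = (if a = b then 1 else 0)"
proof -
  define U :: "complex^'n^'n" where "U = (\<chi> a j. \<phi> j $ a)"
  define V :: "complex^'n^'n" where "V = (\<chi> j a. cnj (\<phi> j $ a))"
  have "V ** U = mat 1"
  proof -
    have "(V ** U) $ j $ k = mat 1 $ j $ k" for j k
    proof -
      have "(V ** U) $ j $ k = cinner (\<phi> k) (\<phi> j)"
        unfolding matrix_matrix_mult_def U_def V_def cinner_def
        by (simp add: mult.commute)
      then show ?thesis using orth[of k j] by (auto simp: mat_def)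
    qed
    then show ?thesis by (simp add: vec_eq_iff)
  qed
  then have "U ** V = mat 1" using matrix_left_right_inverse by blast
  then have "(U ** V) $ a $ b = mat 1 $ a $ b" by simp
  then show ?thesis unfolding matrix_matrix_mult_def U_def V_def by (simp add: mat_def)
qed

lemma mat_pow_eig:
  fixes \<phi> :: "'n::finite \<Rightarrow> complex^'n" and M :: "complex^'n^'n"
  assumes compl: "\<And>a b. (\<Sum>j\<in>UNIV. \<phi> j $ a * cnj (\<phi> j $ b)) = (if a = b then 1 else 0)"
    and eig: "\<And>j. M *v \<phi> j = \<mu> j *s \<phi> j"
  shows "mat_pow M k $ a $ b = (\<Sum>j\<in>UNIV. \<mu> j ^ k * (\<phi> j $ a * cnj (\<phi> j $ b)))"
proof (induction k arbitrary: a b)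
  case 0
  then show ?case using compl[of a b] by (simp add: mat_pow_def mat_def)
next
  case (Suc k)
  have e: "(\<Sum>c\<in>UNIV. M $ a $ c * \<phi> j $ c) = \<mu> j * \<phi> j $ a" for j a
  proof -
    have "(M *v \<phi> j) $ a = (\<mu> j *s \<phi> j) $ a" using eig by simp
    then show ?thesis by (simp add: matrix_vector_mult_def)
  qed
  have "mat_pow M (Suc k) = M ** mat_pow M k" by (simp add: mat_pow_def)
  then have "mat_pow M (Suc k) $ a $ b = (\<Sum>c\<in>UNIV. M $ a $ c * mat_pow M k $ c $ b)"
    by (simp add: matrix_matrix_mult_def)
  also have "\<dots> = (\<Sum>c\<in>UNIV. \<Sum>j\<in>UNIV. \<mu> j ^ k * cnj (\<phi> j $ b) * (M $ a $ c * \<phi> j $ c))"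
    by (simp add: Suc sum_distrib_left mult_ac)
  also have "\<dots> = (\<Sum>j\<in>UNIV. \<mu> j ^ k * cnj (\<phi> j $ b) * (\<Sum>c\<in>UNIV. M $ a $ c * \<phi> j $ c))"
    by (subst sum.swap) (simp add: sum_distrib_left)
  also have "\<dots> = (\<Sum>j\<in>UNIV. \<mu> j ^ Suc k * (\<phi> j $ a * cnj (\<phi> j $ b)))"
    by (simp only: e) (simp add: mult_ac)
  finally show ?case .
qed

lemma mat_exp_eig:
  fixes \<phi> :: "'n::finite \<Rightarrow> complex^'n" and M :: "complex^'n^'n"
  assumes compl: "\<And>a b. (\<Sum>j\<in>UNIV. \<phi> j $ a * cnj (\<phi> j $ b)) = (if a = b then 1 else 0)"
    and eig: "\<And>j. M *v \<phi> j = \<mu> j *s \<phi> j"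
  shows "(\<lambda>k. (1 / fact k) *\<^sub>R mat_pow M k) sums
     (\<chi> a b. \<Sum>j\<in>UNIV. exp (\<mu> j) * (\<phi> j $ a * cnj (\<phi> j $ b)))"
  unfolding sums_def
proof (rule vec_tendstoI, rule vec_tendstoI)
  fix a b
  have "(\<lambda>k. \<Sum>j\<in>UNIV. (\<mu> j ^ k /\<^sub>R fact k) * (\<phi> j $ a * cnj (\<phi> j $ b))) sums
      (\<Sum>j\<in>UNIV. exp (\<mu> j) * (\<phi> j $ a * cnj (\<phi> j $ b)))"
    by (intro sums_sum sums_mult2 exp_converges)
  moreover have "((1 / fact k) *\<^sub>R mat_pow M k) $ a $ b =
      (\<Sum>j\<in>UNIV. (\<mu> j ^ k /\<^sub>R fact k) * (\<phi> j $ a * cnj (\<phi> j $ b)))" for k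
    unfolding vector_scaleR_component mat_pow_eig[OF compl eig] scaleR_sum_right
    by (simp add: scaleR_conv_of_real mult_ac divide_inverse)
  ultimately show "((\<lambda>n. (\<Sum>k<n. (1 / fact k) *\<^sub>R mat_pow M k) $ a $ b) \<longlonglongrightarrow>
     (\<chi> a b. \<Sum>j\<in>UNIV. exp (\<mu> j) * (\<phi> j $ a * cnj (\<phi> j $ b))) $ a $ b)"
    by (simp add: sums_def)
qed

lemma real_mat_pow:
  fixes M :: "complex^'n::finite^'n"
  assumes "\<And>a b. M $ a $ b \<in> \<real>"
  shows "mat_pow M k $ a $ b \<in> \<real>"
proof (induction k arbitrary: a b)
  case 0
  then show ?case by (simp add: mat_pow_def mat_def)
next
  case (Suc k)
  have "mat_pow M (Suc k) = M ** mat_pow M k" by (simp add: mat_pow_def)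
  then show ?case using Suc assms by (simp add: matrix_matrix_mult_def)
qed

lemma lim_entry_real:
  fixes M :: "complex^'n::finite^'n"
  assumes "\<And>a b. M $ a $ b \<in> \<real>"
    and "(\<lambda>k. (1 / fact k) *\<^sub>R mat_pow M k) sums X"
  shows "X $ a $ b \<in> \<real>"
proof -
  have "(\<lambda>n. \<Sum>k<n. (1 / fact k) *\<^sub>R mat_pow M k) \<longlonglongrightarrow> X" using assms(2) by (simp add: sums_def)
  then have "(\<lambda>n. (\<Sum>k<n. (1 / fact k) *\<^sub>R mat_pow M k) $ a $ b) \<longlonglongrightarrow> X $ a $ b"
    by (rule tendsto_vec_nth[OF tendsto_vec_nth])
  then have "(\<lambda>n. Im ((\<Sum>k<n. (1 / fact k) *\<^sub>R mat_pow M k) $ a $ b)) \<longlonglongrightarrow> Im (X $ a $ b)"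
    by (rule tendsto_Im)
  moreover have "Im ((\<Sum>k<n. (1 / fact k) *\<^sub>R mat_pow M k) $ a $ b) = 0" for n
  proof -
    have "((\<Sum>k<n. (1 / fact k) *\<^sub>R mat_pow M k) $ a $ b) \<in> \<real>"
      unfolding sum_component vector_scaleR_component
      by (intro sum_in_Reals) (simp add: scaleR_conv_of_real Reals_divide fact_in_Reals real_mat_pow[OF assms(1)])
    then show ?thesis by (simp add: complex_is_Real_iff)
  qed
  ultimately have "(\<lambda>n. 0::real) \<longlonglongrightarrow> Im (X $ a $ b)" by simp
  then have "Im (X $ a $ b) = 0" by (simp add: LIMSEQ_const_iff)
  then show ?thesis by (simp add: complex_is_Real_iff)
qed

lemma parseval:
  fixes \<phi> :: "'n::finite \<Rightarrow> complex^'n" and g :: "'n \<Rightarrow> complex"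
  assumes compl: "\<And>a b. (\<Sum>j\<in>UNIV. \<phi> j $ a * cnj (\<phi> j $ b)) = (if a = b then 1 else 0)"
  shows "(\<Sum>j\<in>UNIV. (cmod (\<Sum>v\<in>UNIV. g v * cnj (\<phi> j $ v)))\<^sup>2) = (\<Sum>v\<in>UNIV. (cmod (g v))\<^sup>2)"
proof -
  have "complex_of_real (\<Sum>j\<in>UNIV. (cmod (\<Sum>v\<in>UNIV. g v * cnj (\<phi> j $ v)))\<^sup>2)
      = (\<Sum>j\<in>UNIV. (\<Sum>v\<in>UNIV. g v * cnj (\<phi> j $ v)) * cnj (\<Sum>u\<in>UNIV. g u * cnj (\<phi> j $ u)))"
    by (simp only: of_real_sum complex_norm_square)
  also have "\<dots> = (\<Sum>j\<in>UNIV. \<Sum>u\<in>UNIV. \<Sum>v\<in>UNIV. g v * cnj (g u) * (\<phi> j $ u * cnj (\<phi> j $ v)))"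
    by (simp add: sum_distrib_left sum_distrib_right mult_ac)
  also have "\<dots> = (\<Sum>u\<in>UNIV. \<Sum>j\<in>UNIV. \<Sum>v\<in>UNIV. g v * cnj (g u) * (\<phi> j $ u * cnj (\<phi> j $ v)))"
    by (rule sum.swap)
  also have "\<dots> = (\<Sum>u\<in>UNIV. \<Sum>v\<in>UNIV. \<Sum>j\<in>UNIV. g v * cnj (g u) * (\<phi> j $ u * cnj (\<phi> j $ v)))"
    by (rule sum.cong[OF refl], rule sum.swap)
  also have "\<dots> = (\<Sum>u\<in>UNIV. \<Sum>v\<in>UNIV. g v * cnj (g u) * (\<Sum>j\<in>UNIV. \<phi> j $ u * cnj (\<phi> j $ v)))"
    by (simp only: sum_distrib_left)
  also have "\<dots> = (\<Sum>u\<in>UNIV. \<Sum>v\<in>UNIV. if u = v then g v * cnj (g u) else 0)"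
    by (simp only: compl) (rule sum.cong[OF refl], rule sum.cong[OF refl], simp)
  also have "\<dots> = (\<Sum>v\<in>UNIV. g v * cnj (g v))"
    by simp
  also have "\<dots> = complex_of_real (\<Sum>v\<in>UNIV. (cmod (g v))\<^sup>2)"
    by (simp only: of_real_sum complex_norm_square)
  finally show ?thesis using of_real_eq_iff by blast
qed

lemma row_nonzero:
  fixes \<phi> :: "'n::finite \<Rightarrow> complex^'n" and H :: "complex^'n^'n"
  assumes orth: "\<And>j k. cinner (\<phi> j) (\<phi> k) = (if j = k then 1 else 0)"
    and compl: "\<And>a b. (\<Sum>j\<in>UNIV. \<phi> j $ a * cnj (\<phi> j $ b)) = (if a = b then 1 else 0)"
    and H: "\<And>a b. H $ a $ b = (\<Sum>j\<in>UNIV. e j * (\<phi> j $ a * cnj (\<phi> j $ b)))"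
    and e: "\<And>j. e j \<noteq> 0"
  shows "\<exists>i. H $ v $ i \<noteq> 0"
proof (rule ccontr)
  assume "\<not> ?thesis"
  then have z: "H $ v $ i = 0" for i by simp
  have "\<phi> k $ v = 0" for k
  proof -
    have "0 = (\<Sum>i\<in>UNIV. H $ v $ i * \<phi> k $ i)" by (simp add: z)
    also have "\<dots> = (\<Sum>i\<in>UNIV. \<Sum>j\<in>UNIV. e j * \<phi> j $ v * (\<phi> k $ i * cnj (\<phi> j $ i)))"
      by (simp add: H sum_distrib_left mult_ac)
    also have "\<dots> = (\<Sum>j\<in>UNIV. e j * \<phi> j $ v * cinner (\<phi> k) (\<phi> j))"
      by (subst sum.swap) (simp add: cinner_def sum_distrib_left)
    also have "\<dots> = (\<Sum>j\<in>UNIV. e j * \<phi> j $ v * (if k = j then 1 else 0))"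
      by (simp add: orth)
    also have "\<dots> = (\<Sum>j\<in>UNIV. if k = j then e j * \<phi> j $ v else 0)"
      by (rule sum.cong) auto
    also have "\<dots> = e k * \<phi> k $ v" by simp
    finally show ?thesis using e[of k] by simp
  qed
  then show False using compl[of v v] by simp
qed

lemma sum_pair_univ:
  fixes F :: "'a::finite \<times> 'b::finite \<Rightarrow> 'c::comm_monoid_add"
  shows "(\<Sum>k\<in>UNIV. F k) = (\<Sum>i\<in>UNIV. \<Sum>j\<in>UNIV. F (i, j))"
  by (simp only: sum.cartesian_product UNIV_Times_UNIV case_prod_eta)

lemma norm_sq_vec:
  fixes f :: "complex^'n::finite"
  shows "(norm f)\<^sup>2 = (\<Sum>v\<in>UNIV. (cmod (f $ v))\<^sup>2)"
  by (simp add: norm_vec_def L2_set_def sum_nonneg)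

lemma key_pair:
  fixes \<psi> :: "'n::finite \<times> 'n \<Rightarrow> complex^'n" and g :: "'n \<Rightarrow> 'n \<Rightarrow> complex"
  assumes c: "\<And>i j. cinner f (\<psi> (i, j)) = g i j"
  shows "(\<Sum>k\<in>UNIV. (cmod (cinner f (\<psi> k)))\<^sup>2) = (\<Sum>i\<in>UNIV. \<Sum>j\<in>UNIV. (cmod (g i j))\<^sup>2)"
  unfolding sum_pair_univ[where F = "\<lambda>k. (cmod (cinner f (\<psi> k)))\<^sup>2"] c ..

theorem theorem3p1:
  fixes E :: "'n::finite \<Rightarrow> 'n \<Rightarrow> bool"
    and \<phi> :: "'n \<Rightarrow> complex^'n"
    and t :: real
  assumes sym: "\<And>u v. E u v \<Longrightarrow> E v u"
    and irrefl: "\<And>v. \<not> E v v"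
    and connected: "\<And>u v. E\<^sup>*\<^sup>* u v"
    and orthonormal: "\<And>j k. cinner (\<phi> j) (\<phi> k) = (if j = k then 1 else 0)"
    and eigen: "\<And>j. \<exists>c. graph_laplacian E *v \<phi> j = c *s \<phi> j"
    and t_nonneg: "0 \<le> t"
  shows "is_frame (\<lambda>(i, j). diag_mat (column (heat_kernel E t) i) *v \<phi> j) UNIV
       \<and> frame_operator (\<lambda>(i, j). diag_mat (column (heat_kernel E t) i) *v \<phi> j) UNIV
         = (\<Sum>i\<in>UNIV. diag_mat (column (heat_kernel E t) i) ** diag_mat (column (heat_kernel E t) i))"
proof -
  obtain lam where lam: "\<And>j. graph_laplacian E *v \<phi> j = lam j *s \<phi> j"
    using eigen by metis
  define L where "L = graph_laplacian E"
  define M where "M = (- t) *\<^sub>R L"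
  define \<mu> where "\<mu> j = complex_of_real (- t) * lam j" for j
  have compl: "\<And>a b. (\<Sum>j\<in>UNIV. \<phi> j $ a * cnj (\<phi> j $ b)) = (if a = b then 1 else 0)"
    using complete_basis[OF orthonormal] .
  have eigM: "M *v \<phi> j = \<mu> j *s \<phi> j" for j
  proof -
    have "(L *v \<phi> j) $ a = lam j * \<phi> j $ a" for a using lam[of j] by (simp add: L_def)
    then have "(\<Sum>b\<in>UNIV. L $ a $ b * \<phi> j $ b) = lam j * \<phi> j $ a" for a
      by (simp add: matrix_vector_mult_def)
    then have "(M *v \<phi> j) $ a = (\<mu> j *s \<phi> j) $ a" for a
    proof -
      have "(M *v \<phi> j) $ a = (\<Sum>b\<in>UNIV. ((- t) *\<^sub>R L $ a $ b) * \<phi> j $ b)"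
        by (simp add: M_def matrix_vector_mult_def)
      also have "\<dots> = complex_of_real (- t) * (\<Sum>b\<in>UNIV. L $ a $ b * \<phi> j $ b)"
        by (simp add: scaleR_conv_of_real sum_distrib_left mult.assoc)
      also have "\<dots> = (\<mu> j *s \<phi> j) $ a"
        using \<open>\<And>a. (\<Sum>b\<in>UNIV. L $ a $ b * \<phi> j $ b) = lam j * \<phi> j $ a\<close>
        by (simp add: \<mu>_def)
      finally show ?thesis .
    qed
    then show ?thesis by (simp add: vec_eq_iff)
  qed
  define H where "H = heat_kernel E t"
  define X :: "complex^'n^'n" where
    "X = (\<chi> a b. \<Sum>j\<in>UNIV. exp (\<mu> j) * (\<phi> j $ a * cnj (\<phi> j $ b)))"
  have sX: "(\<lambda>k. (1 / fact k) *\<^sub>R mat_pow M k) sums X"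
    unfolding X_def using mat_exp_eig[OF compl eigM] .
  have HM: "H = mat_exp M" by (simp add: H_def heat_kernel_def M_def L_def)
  have HX: "H = X"
    unfolding HM mat_exp_def using sums_unique[OF sX] by simp
  have Hab: "H $ a $ b = (\<Sum>j\<in>UNIV. exp (\<mu> j) * (\<phi> j $ a * cnj (\<phi> j $ b)))" for a b
    by (simp add: HX X_def)
  have Lab: "L $ a $ b = (if a = b then of_nat (card {u. E a u}) else 0) - (if E a b then 1 else 0)" for a b
    by (simp add: L_def graph_laplacian_def degree_matrix_def adjacency_matrix_def)
  have Mreal: "M $ a $ b \<in> \<real>" for a b
  proof -
    have "L $ a $ b \<in> \<real>" unfolding Lab by auto
    then show ?thesis by (simp add: M_def scaleR_conv_of_real[where 'a=complex])
  qed
  have Hreal: "cnj (H $ a $ b) = H $ a $ b" for a b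
  proof -
    have "X $ a $ b \<in> \<real>" by (rule lim_entry_real[OF Mreal sX])
    then show ?thesis unfolding HX Reals_cnj_iff .
  qed
  define \<psi> where "\<psi> = (\<lambda>(i, j). diag_mat (column H i) *v \<phi> j)"
  have \<psi>c: "\<psi> (i, j) $ a = H $ a $ i * \<phi> j $ a" for i j a
  proof -
    have "\<psi> (i, j) $ a = (\<Sum>b\<in>UNIV. (if a = b then column H i $ a else 0) * \<phi> j $ b)"
      by (simp add: \<psi>_def diag_mat_def matrix_vector_mult_def)
    also have "\<dots> = (\<Sum>b\<in>UNIV. if a = b then H $ a $ i * \<phi> j $ b else 0)"
      by (rule sum.cong) (auto simp: column_def)
    finally show ?thesis by simp
  qed
  have FO: "frame_operator \<psi> UNIV = (\<Sum>i\<in>UNIV. diag_mat (column H i) ** diag_mat (column H i))"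
  proof -
    have "frame_operator \<psi> UNIV $ a $ b =
        (\<Sum>i\<in>UNIV. diag_mat (column H i) ** diag_mat (column H i)) $ a $ b" for a b
    proof -
      have "frame_operator \<psi> UNIV $ a $ b = (\<Sum>i\<in>UNIV. \<Sum>j\<in>UNIV. H $ a $ i * cnj (H $ b $ i) * (\<phi> j $ a * cnj (\<phi> j $ b)))"
      proof -
        have "frame_operator \<psi> UNIV $ a $ b = (\<Sum>k\<in>UNIV. \<psi> k $ a * cnj (\<psi> k $ b))"
          by (simp add: frame_operator_def outer_def)
        also have "\<dots> = (\<Sum>i\<in>UNIV. \<Sum>j\<in>UNIV. \<psi> (i, j) $ a * cnj (\<psi> (i, j) $ b))"
          by (rule sum_pair_univ)
        also have "\<dots> = (\<Sum>i\<in>UNIV. \<Sum>j\<in>UNIV. H $ a $ i * cnj (H $ b $ i) * (\<phi> j $ a * cnj (\<phi> j $ b)))"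
          by (intro sum.cong refl) (simp only: \<psi>c complex_cnj_mult mult_ac)
        finally show ?thesis .
      qed
      also have "\<dots> = (\<Sum>i\<in>UNIV. H $ a $ i * cnj (H $ b $ i) * (if a = b then 1 else 0))"
        by (simp add: sum_distrib_left[symmetric] compl)
      also have "\<dots> = (\<Sum>i\<in>UNIV. diag_mat (column H i) ** diag_mat (column H i)) $ a $ b"
      proof -
        have "(\<Sum>i\<in>UNIV. diag_mat (column H i) ** diag_mat (column H i)) $ a $ b
           = (\<Sum>i\<in>UNIV. \<Sum>c\<in>UNIV. (if a = c then column H i $ a else 0) * (if c = b then column H i $ c else 0))"
          by (simp add: matrix_matrix_mult_def diag_mat_def)
        also have "\<dots> = (\<Sum>i\<in>UNIV. \<Sum>c\<in>UNIV. if c = a then (if a = b then H $ a $ i * H $ a $ i else 0) else 0)"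
          by (intro sum.cong refl) (auto simp: column_def)
        also have "\<dots> = (\<Sum>i\<in>UNIV. H $ a $ i * cnj (H $ b $ i) * (if a = b then 1 else 0))"
          by (intro sum.cong refl) (simp add: Hreal)
        finally show ?thesis by simp
      qed
      finally show ?thesis .
    qed
    then show ?thesis by (simp add: vec_eq_iff)
  qed
  define w where "w v = (\<Sum>i\<in>UNIV. (cmod (H $ v $ i))\<^sup>2)" for v
  have wpos: "w v > 0" for v
  proof -
    obtain i where i: "H $ v $ i \<noteq> 0"
      using row_nonzero[OF orthonormal compl Hab, of v] by auto
    have "(cmod (H $ v $ i))\<^sup>2 \<le> w v"
      unfolding w_def by (rule member_le_sum) auto
    moreover have "(cmod (H $ v $ i))\<^sup>2 > 0" using i by simp
    ultimately show ?thesis by linarith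
  qed
  have key: "(\<Sum>k\<in>UNIV. (cmod (cinner f (\<psi> k)))\<^sup>2) = (\<Sum>v\<in>UNIV. (cmod (f $ v))\<^sup>2 * w v)" for f
  proof -
    have "(\<Sum>k\<in>UNIV. (cmod (cinner f (\<psi> k)))\<^sup>2)
        = (\<Sum>i\<in>UNIV. \<Sum>j\<in>UNIV. (cmod (\<Sum>v\<in>UNIV. (f $ v * cnj (H $ v $ i)) * cnj (\<phi> j $ v)))\<^sup>2)"
    proof -
      have c: "cinner f (\<psi> (i, j)) = (\<Sum>v\<in>UNIV. (f $ v * cnj (H $ v $ i)) * cnj (\<phi> j $ v))" for i j
        unfolding cinner_def \<psi>c complex_cnj_mult by (simp only: mult.assoc)
      show ?thesis by (rule key_pair) (rule c)
    qed
    also have "\<dots> = (\<Sum>i\<in>UNIV. \<Sum>v\<in>UNIV. (cmod (f $ v * cnj (H $ v $ i)))\<^sup>2)"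
      by (simp only: parseval[OF compl])
    also have "\<dots> = (\<Sum>v\<in>UNIV. \<Sum>i\<in>UNIV. (cmod (f $ v))\<^sup>2 * (cmod (H $ v $ i))\<^sup>2)"
      by (subst sum.swap) (simp add: norm_mult power_mult_distrib)
    also have "\<dots> = (\<Sum>v\<in>UNIV. (cmod (f $ v))\<^sup>2 * w v)"
      by (simp add: w_def sum_distrib_left)
    finally show ?thesis .
  qed
  define A where "A = Min (range w)"
  define B where "B = Max (range w)"
  have Aw: "A \<le> w v" for v unfolding A_def by simp
  have Bw: "w v \<le> B" for v unfolding B_def by simp
  have Apos: "A > 0"
  proof -
    have "A \<in> range w" unfolding A_def by (rule Min_in) auto
    then show ?thesis using wpos by auto
  qed
  have frame: "is_frame \<psi> UNIV"
    unfolding is_frame_def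
  proof (intro exI conjI allI)
    show "0 < A" by (rule Apos)
    show "A \<le> B" using Aw Bw by (meson order_trans)
    fix f :: "complex^'n"
    show "A * (norm f)\<^sup>2 \<le> (\<Sum>k\<in>UNIV. (cmod (cinner f (\<psi> k)))\<^sup>2)"
      unfolding key norm_sq_vec sum_distrib_left
      by (rule sum_mono) (simp add: Aw mult.commute mult_right_mono)
    show "(\<Sum>k\<in>UNIV. (cmod (cinner f (\<psi> k)))\<^sup>2) \<le> B * (norm f)\<^sup>2"
      unfolding key norm_sq_vec sum_distrib_left
      by (rule sum_mono) (simp add: Bw mult.commute mult_right_mono)
  qed
  have eq: "(\<lambda>(i, j). diag_mat (column (heat_kernel E t) i) *v \<phi> j) = \<psi>"
    by (simp add: \<psi>_def H_def)
  show ?thesis unfolding eq using frame FO by (simp add: H_def)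
qed

end
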